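(* Let $A$ be a commutative quasi-ring and $I$ an ideal of $A$. The congruence class of $0$ modulo $I$ is equal to the heart $C(I)$ of $I$, and it is a closed ideal of $A$. In particular, if $I$ is closed, the class of $0$ modulo $I$ is $I$ itself.
   Context: A quasi-ring is a semiring (with $(A,+)$ a commutative monoid with neutral $0$, $(A,\cdot)$ a monoid with unit $1$, distributivity, $0$ absorbing) whose unit $1$ is quasi-invertible for addition (there is $y$ with $1+y+1=1$, $y+1+y=y$). An ideal is a subset containing $0$ stable under addition and under multiplication by elements of $A$. Congruence modulo $I$: $a\equiv b \pmod I$ iff $(a+I)\cap(b+I)\neq\emptyset$ and for all $c\in I$, $r\in A$: $ac+r\in I\iff bc+r\in I$. The closure of $I$ is $\overline I=\{x\in A : (x+I)\cap I\neq\emptyset\}$; $I$ is closed if $\overline I=I$ (equivalently: $(a+I)\cap I\neq\emptyset\Rightarrow a\in I$). The heart of $I$ is $C(I)=\{x\in\overline I : \forall \alpha\in I,\ \forall r\in A,\ x\alpha+r\in I\Rightarrow r\in I\}$. *)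

theory Defs
  imports Main
begin

text \<open>Commutative semirings with unit are modelled by the sort
  {comm_semiring_0, comm_monoid_mult} (commutative additive monoid, commutative
  multiplicative monoid, distributivity, 0 absorbing; 0 = 1 is allowed).
  Quasi-invertibility of 1 is an explicit hypothesis of the theorem.\<close>

definition qr_ideal :: "'a::{comm_semiring_0, comm_monoid_mult} set \<Rightarrow> bool" where
  "qr_ideal I \<longleftrightarrow> 0 \<in> I \<and> (\<forall>x\<in>I. \<forall>y\<in>I. x + y \<in> I) \<and> (\<forall>a. \<forall>x\<in>I. a * x \<in> I)"

definition qr_cong :: "'a::{comm_semiring_0, comm_monoid_mult} set \<Rightarrow> 'a \<Rightarrow> 'a \<Rightarrow> bool" where
  "qr_cong I a b \<longleftrightarrow> ((\<lambda>i. a + i) ` I \<inter> (\<lambda>i. b + i) ` I \<noteq> {}) \<and>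
      (\<forall>c\<in>I. \<forall>r. a * c + r \<in> I \<longleftrightarrow> b * c + r \<in> I)"

definition qr_closure :: "'a::{comm_semiring_0, comm_monoid_mult} set \<Rightarrow> 'a set" where
  "qr_closure I = {x. (\<lambda>i. x + i) ` I \<inter> I \<noteq> {}}"

definition qr_closed :: "'a::{comm_semiring_0, comm_monoid_mult} set \<Rightarrow> bool" where
  "qr_closed I \<longleftrightarrow> qr_closure I = I"

definition qr_heart :: "'a::{comm_semiring_0, comm_monoid_mult} set \<Rightarrow> 'a set" where
  "qr_heart I = {x \<in> qr_closure I. \<forall>\<alpha>\<in>I. \<forall>r. x * \<alpha> + r \<in> I \<longrightarrow> r \<in> I}"

end

theory Submission
  imports Defs
begin

lemma clos_iff: "x \<in> qr_closure I \<longleftrightarrow> (\<exists>i\<in>I. x + i \<in> I)"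
  unfolding qr_closure_def by blast

lemma cong0_iff:
  fixes I :: "'a::{comm_semiring_0, comm_monoid_mult} set"
  assumes ideal: "qr_ideal I"
  shows "qr_cong I x 0 \<longleftrightarrow> x \<in> qr_heart I"
proof -
  have m: "\<And>a y. y \<in> I \<Longrightarrow> a * y \<in> I" and ad: "\<And>u v. u \<in> I \<Longrightarrow> v \<in> I \<Longrightarrow> u + v \<in> I"
    and z: "0 \<in> I" using ideal unfolding qr_ideal_def by auto
  have c1: "((\<lambda>i. x + i) ` I \<inter> (\<lambda>i. 0 + i) ` I \<noteq> {}) \<longleftrightarrow> x \<in> qr_closure I"
    unfolding qr_closure_def by auto
  have c2: "(\<forall>c\<in>I. \<forall>r. x * c + r \<in> I \<longleftrightarrow> 0 * c + r \<in> I) \<longleftrightarrow>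
      (\<forall>\<alpha>\<in>I. \<forall>r. x * \<alpha> + r \<in> I \<longrightarrow> r \<in> I)"
  proof -
    have "x * c + r \<in> I" if "c \<in> I" "r \<in> I" for c r
      using ad[OF m[OF that(1), of x] that(2)] by simp
    thus ?thesis by auto
  qed
  show ?thesis unfolding qr_cong_def qr_heart_def using c1 c2 by auto
qed

theorem proposition2p3:
  fixes I :: "'a::{comm_semiring_0, comm_monoid_mult} set"
  assumes quasi_inv_one: "\<exists>y::'a. 1 + y + 1 = 1 \<and> y + 1 + y = y"
    and ideal: "qr_ideal I"
  shows "{x. qr_cong I x 0} = qr_heart I
         \<and> qr_ideal {x. qr_cong I x 0} \<and> qr_closed {x. qr_cong I x 0}
         \<and> (qr_closed I \<longrightarrow> {x. qr_cong I x 0} = I)"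
proof -
  have m: "\<And>a y. y \<in> I \<Longrightarrow> a * y \<in> I" and ad: "\<And>u v. u \<in> I \<Longrightarrow> v \<in> I \<Longrightarrow> u + v \<in> I"
    and z: "0 \<in> I" using ideal unfolding qr_ideal_def by auto
  have E: "{x. qr_cong I x 0} = qr_heart I" using cong0_iff[OF ideal] by auto
  have H: "x \<in> qr_heart I \<longleftrightarrow> (\<exists>i\<in>I. x + i \<in> I) \<and> (\<forall>\<alpha>\<in>I. \<forall>r. x * \<alpha> + r \<in> I \<longrightarrow> r \<in> I)" for x
    unfolding qr_heart_def clos_iff by auto
  let ?C = "qr_heart I"
  have z0: "0 \<in> ?C" using z unfolding H by auto
  have addC: "x + y \<in> ?C" if "x \<in> ?C" "y \<in> ?C" for x y
  proof -
    obtain i where i: "i \<in> I" "x + i \<in> I" using H[of x] \<open>x \<in> ?C\<close> by blast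
    obtain j where j: "j \<in> I" "y + j \<in> I" using H[of y] \<open>y \<in> ?C\<close> by blast
    have "x + y + (i + j) = (x + i) + (y + j)" by (simp add: ac_simps)
    hence cl: "x + y + (i + j) \<in> I" using ad i j by simp
    have "r \<in> I" if "(x + y) * \<alpha> + r \<in> I" "\<alpha> \<in> I" for \<alpha> r
    proof -
      have "(x + y) * \<alpha> + r = x * \<alpha> + (y * \<alpha> + r)" by (simp add: distrib_right add.assoc)
      hence "x * \<alpha> + (y * \<alpha> + r) \<in> I" using that(1) by simp
      hence "y * \<alpha> + r \<in> I" using \<open>x \<in> ?C\<close> that(2) unfolding H by blast
      thus ?thesis using \<open>y \<in> ?C\<close> that(2) unfolding H by blast
    qed
    moreover have "i + j \<in> I" using ad i j by simp
    ultimately show ?thesis unfolding H using cl by blast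
  qed
  have mulC: "a * x \<in> ?C" if "x \<in> ?C" for a x
  proof -
    obtain i where i: "i \<in> I" "x + i \<in> I" using H[of x] \<open>x \<in> ?C\<close> by blast
    have "a * x + a * i = a * (x + i)" by (simp add: distrib_left)
    hence cl: "a * x + a * i \<in> I" using m i by simp
    have "r \<in> I" if "(a * x) * \<alpha> + r \<in> I" "\<alpha> \<in> I" for \<alpha> r
    proof -
      have "x * (a * \<alpha>) + r \<in> I" using that(1) by (simp add: ac_simps)
      thus ?thesis using \<open>x \<in> ?C\<close> m[OF that(2)] unfolding H by blast
    qed
    moreover have "a * i \<in> I" using m i by simp
    ultimately show ?thesis unfolding H using cl by blast
  qed
  have idC: "qr_ideal ?C" unfolding qr_ideal_def using z0 addC mulC by blast
  have clC: "qr_closed ?C"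
    unfolding qr_closed_def
  proof
    show "qr_closure ?C \<subseteq> ?C"
    proof
      fix x assume "x \<in> qr_closure ?C"
      then obtain c where c: "c \<in> ?C" "x + c \<in> ?C" unfolding clos_iff by auto
      obtain i where i: "i \<in> I" "c + i \<in> I" using H[of c] c(1) by blast
      obtain i' where i': "i' \<in> I" "x + c + i' \<in> I" using H[of "x+c"] c(2) by blast
      have "x + ((c + i) + i') = (x + c + i') + i" by (simp add: ac_simps)
      hence cl: "x + ((c + i) + i') \<in> I" using ad i i' by simp
      have "r \<in> I" if "x * \<alpha> + r \<in> I" "\<alpha> \<in> I" for \<alpha> r
      proof -
        have "(x + c) * \<alpha> + r = (x * \<alpha> + r) + c * \<alpha>" by (simp add: distrib_right add_ac)
        hence "(x + c) * \<alpha> + r \<in> I" using ad that m[OF that(2), of c] by (simp add: mult.commute)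
        thus ?thesis using c(2) that(2) unfolding H by blast
      qed
      moreover have "c + i + i' \<in> I" using ad i i' by simp
      ultimately show "x \<in> ?C" unfolding H using cl by blast
    qed
  next
    show "?C \<subseteq> qr_closure ?C"
    proof
      fix x assume "x \<in> ?C"
      thus "x \<in> qr_closure ?C" using z0 clos_iff[of x ?C] by (metis add_0_right)
    qed
  qed
  have last: "?C = I" if cI: "qr_closed I"
  proof
    show "?C \<subseteq> I" using cI unfolding qr_closed_def qr_heart_def by auto
    show "I \<subseteq> ?C"
    proof
      fix x assume x: "x \<in> I"
      have "r \<in> I" if "x * \<alpha> + r \<in> I" "\<alpha> \<in> I" for \<alpha> r
      proof -
        have "r + x * \<alpha> \<in> I" using that(1) by (simp add: ac_simps)
        hence "r \<in> qr_closure I" unfolding clos_iff using m[OF x, of \<alpha>] by (auto simp: mult.commute)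
        thus ?thesis using cI unfolding qr_closed_def by simp
      qed
      moreover have "x + 0 \<in> I" using x by simp
      ultimately show "x \<in> ?C" unfolding H using z by blast
    qed
  qed
  show ?thesis using E idC clC last by simp
qed

end
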